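(* Let $K_r,K_t,M_r,N_t$ be positive integers and $\kappa_t$ an integer with $0\le\kappa_t\le K_t-1$. For $j=1,\dots,K_r$ and $k=1,\dots,K_t$ let $\mathbf{H}_{jk}\in\mathbb{C}^{M_r\times N_t}$ be random matrices whose entries are i.i.d. zero-mean unit-variance circularly symmetric complex Gaussian random variables, and let $\gamma^{j}_{ik}$, $i=1,\dots,K_t-\kappa_t$, $j=1,\dots,K_r$, $k=1,\dots,K_t$, be i.i.d. random scalars drawn from a continuous distribution, independent of the channel matrices. Let $\mathbf{C}$ be the $K_r(K_t-\kappa_t)M_r\times K_tN_t$ block matrix whose block rows are indexed by pairs $(j,i)$, ordered with $j=1,\dots,K_r$ as the outer index and $i=1,\dots,K_t-\kappa_t$ as the inner index, whose block columns are indexed by $k=1,\dots,K_t$, and whose $((j,i),k)$ block is $\gamma^{j}_{ik}\mathbf{H}_{jk}$. If $N_t\le K_rM_r$, then almost surely \[ \operatorname{rank}(\mathbf{C})=\min\big(K_r(K_t-\kappa_t)M_r,\;K_tN_t\big). \] *)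

theory Defs
  imports "HOL-Probability.Probability" "Jordan_Normal_Form.DL_Rank"
begin

text \<open>Block matrix C (0-based indices). Row index r corresponds to the triple (j,i,a) with
  j < Kr the outer block-row index, i < Kt - kappa the inner block-row index and a < Mr the row
  inside the block: r = (j*(Kt-kappa) + i)*Mr + a. Column index c corresponds to (k,b) with
  c = k*Nt + b.\<close>
definition blockC ::
  "nat \<Rightarrow> nat \<Rightarrow> nat \<Rightarrow> nat \<Rightarrow> nat \<Rightarrow> (nat \<Rightarrow> nat \<Rightarrow> nat \<Rightarrow> nat \<Rightarrow> complex)
   \<Rightarrow> (nat \<Rightarrow> nat \<Rightarrow> nat \<Rightarrow> complex) \<Rightarrow> complex Matrix.mat" where
  "blockC Kr Kt Mr Nt \<kappa> H g =
     Matrix.mat (Kr * (Kt - \<kappa>) * Mr) (Kt * Nt)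
       (\<lambda>(r, c). let j = r div ((Kt - \<kappa>) * Mr);
                     i = (r mod ((Kt - \<kappa>) * Mr)) div Mr;
                     a = r mod Mr;
                     k = c div Nt;
                     b = c mod Nt
                 in g i j k * H j k a b)"

definition mat_rank :: "complex Matrix.mat \<Rightarrow> nat" where
  "mat_rank A = vec_space.rank (dim_row A) A"

text \<open>Standard circularly-symmetric complex Gaussian (zero mean, E|z|^2 = 1):
  real and imaginary parts independent, each N(0, 1/2).\<close>
definition std_circ_gaussian :: "'w measure \<Rightarrow> ('w \<Rightarrow> complex) \<Rightarrow> bool" where
  "std_circ_gaussian M Z \<longleftrightarrow>
     distributed M lborel (\<lambda>w. Re (Z w)) (normal_density 0 (sqrt (1/2))) \<and>
     distributed M lborel (\<lambda>w. Im (Z w)) (normal_density 0 (sqrt (1/2))) \<and>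
     prob_space.indep_var M borel (\<lambda>w. Re (Z w)) borel (\<lambda>w. Im (Z w))"

end

theory Submission
  imports Defs "Jordan_Normal_Form.DL_Rank_Submatrix"
begin


definition mpoly :: "'i set \<Rightarrow> (('i \<Rightarrow> complex) \<Rightarrow> complex) \<Rightarrow> bool" where
  "mpoly I F \<longleftrightarrow> (\<forall>v\<in>I. \<forall>x. \<exists>p. \<forall>t. F (x(v:=t)) = poly p t)"

lemma AE_mpoly:
  fixes F :: "('i \<Rightarrow> complex) \<Rightarrow> complex"
  assumes "finite I"
    and "\<And>i. i \<in> I \<Longrightarrow> prob_space (D i)" "\<And>i. i \<in> I \<Longrightarrow> sets (D i) = sets borel"
    and "\<And>i z. i \<in> I \<Longrightarrow> emeasure (D i) {z} = 0"
    and "mpoly I F" "F \<in> borel_measurable (PiM I D)" "x0 \<in> space (PiM I D)" "F x0 \<noteq> 0"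
  shows "AE x in PiM I D. F x \<noteq> 0"
  using assms
proof (induction I arbitrary: F x0 rule: finite_induct)
  case empty
  have "x0 = (\<lambda>_. undefined)" using empty by (simp add: space_PiM)
  then show ?case unfolding PiM_empty AE_count_space using empty by simp
next
  case (insert v I)
  have Dv: "prob_space (D v)" "sets (D v) = sets borel" using insert by auto
  interpret Dv: prob_space "D v" by fact
  interpret PI: prob_space "PiM I D" using insert by (intro prob_space_PiM) auto
  interpret P: pair_sigma_finite "D v" "PiM I D" ..
  have spDv: "space (D v) = UNIV" using Dv(2) sets_eq_imp_space_eq by fastforce
  have Fm: "F \<in> borel_measurable (PiM (insert v I) D)" by fact
  have upd_m: "(\<lambda>(t, X). X(v := t)) \<in> measurable (D v \<Otimes>\<^sub>M PiM I D) (PiM (insert v I) D)"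
    by measurable
  define G where "G X = F (X(v := x0 v))" for X
  have "AE X in PiM I D. G X \<noteq> 0"
  proof (rule insert.IH)
    show "mpoly I G" using insert.prems(4) unfolding mpoly_def G_def
    proof (intro ballI allI)
      fix u x assume H: "\<forall>v\<in>insert v I. \<forall>x. \<exists>p. \<forall>t. F (x(v := t)) = poly p t" and u: "u \<in> I"
      then obtain p where "\<forall>t. F ((x(v := x0 v))(u := t)) = poly p t" by blast
      moreover have "u \<noteq> v" using u insert.hyps by auto
      ultimately show "\<exists>p. \<forall>t. F (x(u := t, v := x0 v)) = poly p t"
        by (metis fun_upd_twist)
    qed
    have "(\<lambda>X. (x0 v, X)) \<in> measurable (PiM I D) (D v \<Otimes>\<^sub>M PiM I D)"
    proof (rule measurable_Pair)
      show "(\<lambda>X. x0 v) \<in> measurable (PiM I D) (D v)" using spDv by (intro measurable_const) simp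
      show "(\<lambda>X. X) \<in> measurable (PiM I D) (PiM I D)" by (rule measurable_ident_sets) simp
    qed
    from measurable_comp[OF this upd_m]
    have "(\<lambda>X. X(v := x0 v)) \<in> measurable (PiM I D) (PiM (insert v I) D)"
      by (simp add: o_def)
    then show "G \<in> borel_measurable (PiM I D)"
      unfolding G_def using Fm by (rule measurable_compose)
    show "restrict x0 I \<in> space (PiM I D)"
      using insert.prems(6) by (auto simp: space_PiM)
    have "(restrict x0 I)(v := x0 v) = x0"
      using insert.prems(6) by (auto simp: space_PiM PiE_def extensional_def fun_eq_iff)
    then show "G (restrict x0 I) \<noteq> 0" using insert.prems(7) by (simp add: G_def)
  qed (use insert in auto)
  moreover have pt: "AE t in D v. F (X(v := t)) \<noteq> 0" if "G X \<noteq> 0" for X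
  proof -
    obtain p where p: "\<forall>t. F (X(v := t)) = poly p t"
      using insert.prems(4) unfolding mpoly_def by (metis insertI1 fun_upd_def)
    have "p \<noteq> 0" using that p by (auto simp: G_def)
    then have fin: "finite {t. poly p t = 0}" by (rule poly_roots_finite)
    have "AE t in D v. \<forall>z\<in>{t. poly p t = 0}. t \<noteq> z"
    proof (rule eventually_ball_finite[OF fin], intro ballI)
      fix z
      have "{z} \<in> null_sets (D v)" using insert.prems(3)[of v z] Dv(2) by (auto simp: null_sets_def)
      from AE_not_in[OF this] show "AE t in D v. t \<noteq> z" by simp
    qed
    then show "AE t in D v. F (X(v := t)) \<noteq> 0"
      by eventually_elim (use p in auto)
  qed
  ultimately have AE1: "AE X in PiM I D. AE t in D v. F (X(v := t)) \<noteq> 0"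
    by (metis (mono_tags, lifting) eventually_mono)
  have sets1: "{x \<in> space (D v \<Otimes>\<^sub>M PiM I D). F ((snd x)(v := fst x)) \<noteq> 0} \<in> sets (D v \<Otimes>\<^sub>M PiM I D)"
  proof -
    have "(\<lambda>x. F ((snd x)(v := fst x))) \<in> borel_measurable (D v \<Otimes>\<^sub>M PiM I D)"
      using measurable_compose[OF upd_m Fm] by (simp add: case_prod_beta')
    then show ?thesis by measurable
  qed
  have "AE t in D v. AE X in PiM I D. F (X(v := t)) \<noteq> 0"
    using AE1 P.AE_commute[of "\<lambda>t X. F (X(v := t)) \<noteq> 0"] sets1 by simp
  then have "AE p in D v \<Otimes>\<^sub>M PiM I D. F ((snd p)(v := fst p)) \<noteq> 0"
    using P.AE_pair_iff[of "\<lambda>t X. F (X(v := t)) \<noteq> 0"] sets1 by simp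
  then have AEd: "AE x in distr (D v \<Otimes>\<^sub>M PiM I D) (PiM (insert v I) D) (\<lambda>(t, X). X(v := t)). F x \<noteq> 0"
    by (subst AE_distr_iff[OF upd_m]) (use Fm in \<open>auto simp: case_prod_beta'\<close>)
  moreover have eq: "distr (D v \<Otimes>\<^sub>M PiM I D) (PiM (insert v I) D) (\<lambda>(t, X). X(v := t)) = PiM (insert v I) D"
    by (rule distr_pair_PiM_eq_PiM) (use insert.prems in auto)
  show ?case using AEd unfolding eq .
qed



lemma (in vec_space) rank_le_nr:
  assumes "A \<in> carrier_mat n nc" shows "rank A \<le> n"
proof -
  have sub: "set (cols A) \<subseteq> carrier_vec n" using cols_dim[of A] assms by auto
  have "subspace class_ring (span (set (cols A))) V"
    using span_is_subspace[OF sub] .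
  from subspace_dim[OF this fin_dim fin_dim_span_cols[OF assms]] show ?thesis
    unfolding rank_def dim_is_n by simp
qed

lemma pick_lessThan: "(j::nat) < m \<Longrightarrow> pick {..<m} j = j"
proof -
  assume "j < m"
  have "card {a. a < m \<and> a \<in> UNIV} = m" by simp
  then have "pick UNIV j = pick {a. a < m \<and> a \<in> (UNIV::nat set)} j"
    using pick_reduce_set[of j m UNIV] \<open>j < m\<close> by simp
  moreover have "{a. a < m \<and> a \<in> (UNIV::nat set)} = {..<m}" by auto
  ultimately show ?thesis by (simp add: pick_UNIV)
qed



lemma mpoly_const[intro]: "mpoly I (\<lambda>x. c)"
  unfolding mpoly_def by (intro ballI allI exI[of _ "[:c:]"]) simp

lemma mpoly_coord[intro]: "mpoly I (\<lambda>x::'i\<Rightarrow>complex. x u)"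
  unfolding mpoly_def
proof (intro ballI allI)
  fix v and x :: "'i \<Rightarrow> complex"
  show "\<exists>p. \<forall>t. (x(v := t)) u = poly p t"
  proof (cases "v = u")
    case True
    have "\<forall>t::complex. (x(v := t)) u = poly [:0, 1:] t" using True by simp
    then show ?thesis by blast
  next
    case False
    have "\<forall>t::complex. (x(v := t)) u = poly [:x u:] t" using False by simp
    then show ?thesis by blast
  qed
qed

lemma mpoly_add[intro]: "mpoly I F \<Longrightarrow> mpoly I G \<Longrightarrow> mpoly I (\<lambda>x. F x + G x)"
  unfolding mpoly_def
proof (intro ballI allI)
  fix v x assume "\<forall>v\<in>I. \<forall>x. \<exists>p. \<forall>t. F (x(v := t)) = poly p t" "\<forall>v\<in>I. \<forall>x. \<exists>p. \<forall>t. G (x(v := t)) = poly p t" "v \<in> I"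
  then obtain p q where "\<forall>t. F (x(v := t)) = poly p t" "\<forall>t. G (x(v := t)) = poly q t" by meson
  then show "\<exists>p. \<forall>t. F (x(v := t)) + G (x(v := t)) = poly p t"
    by (intro exI[of _ "p + q"]) simp
qed

lemma mpoly_mult[intro]: "mpoly I F \<Longrightarrow> mpoly I G \<Longrightarrow> mpoly I (\<lambda>x. F x * G x)"
  unfolding mpoly_def
proof (intro ballI allI)
  fix v x assume "\<forall>v\<in>I. \<forall>x. \<exists>p. \<forall>t. F (x(v := t)) = poly p t" "\<forall>v\<in>I. \<forall>x. \<exists>p. \<forall>t. G (x(v := t)) = poly p t" "v \<in> I"
  then obtain p q where "\<forall>t. F (x(v := t)) = poly p t" "\<forall>t. G (x(v := t)) = poly q t" by meson
  then show "\<exists>p. \<forall>t. F (x(v := t)) * G (x(v := t)) = poly p t"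
    by (intro exI[of _ "p * q"]) simp
qed

lemma mpoly_sum:
  assumes "finite S" "\<And>s. s \<in> S \<Longrightarrow> mpoly I (F s)"
  shows "mpoly I (\<lambda>x. \<Sum>s\<in>S. F s x)"
  using assms by (induction S rule: finite_induct) auto

lemma mpoly_prod:
  assumes "finite S" "\<And>s. s \<in> S \<Longrightarrow> mpoly I (F s)"
  shows "mpoly I (\<lambda>x. \<Prod>s\<in>S. F s x)"
  using assms by (induction S rule: finite_induct) auto

lemma mpoly_det:
  assumes "\<And>i j. i < n \<Longrightarrow> j < n \<Longrightarrow> mpoly I (\<lambda>x. E x i j)"
  shows "mpoly I (\<lambda>x. det (Matrix.mat n n (\<lambda>(i,j). E x i j)))"
proof -
  have "(\<lambda>x. det (Matrix.mat n n (\<lambda>(i,j). E x i j))) =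
        (\<lambda>x. \<Sum>p\<in>{p. p permutes {0..<n}}. signof p * (\<Prod>i = 0..<n. E x i (p i)))"
    by (rule ext, subst det_def'[of _ n]) (auto intro!: sum.cong prod.cong simp: permutes_in_image)
  moreover have "mpoly I (\<lambda>x. \<Sum>p\<in>{p. p permutes {0..<n}}. signof p * (\<Prod>i = 0..<n. E x i (p i)))"
    by (intro mpoly_sum mpoly_mult mpoly_const mpoly_prod assms finite_permutations)
       (auto simp: permutes_in_image)
  ultimately show ?thesis by simp
qed

lemma meas_det:
  assumes "\<And>i j. i < n \<Longrightarrow> j < n \<Longrightarrow> (\<lambda>x. E x i j) \<in> borel_measurable N"
  shows "(\<lambda>x. det (Matrix.mat n n (\<lambda>(i,j). E x i j)) :: complex) \<in> borel_measurable N"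
proof -
  have "(\<lambda>x. det (Matrix.mat n n (\<lambda>(i,j). E x i j))) =
        (\<lambda>x. \<Sum>p\<in>{p. p permutes {0..<n}}. signof p * (\<Prod>i = 0..<n. E x i (p i)))"
    by (rule ext, subst det_def'[of _ n]) (auto intro!: sum.cong prod.cong simp: permutes_in_image)
  moreover have "(\<lambda>x. \<Sum>p\<in>{p. p permutes {0..<n}}. signof p * (\<Prod>i = 0..<n. E x i (p i))) \<in> borel_measurable N"
    by (intro borel_measurable_sum borel_measurable_times borel_measurable_const borel_measurable_prod assms)
       (auto simp: permutes_in_image)
  ultimately show ?thesis by simp
qed

lemma meas_coord:
  "(\<lambda>x. x u) \<in> borel_measurable (PiM I (\<lambda>_. borel :: complex measure))"
proof (cases "u \<in> I")
  case True then show ?thesis by measurable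
next
  case False
  have "(\<lambda>x. undefined :: complex) \<in> borel_measurable (PiM I (\<lambda>_. borel :: complex measure))" by simp
  then show ?thesis
    by (rule measurable_cong[THEN iffD1, rotated]) (use False in \<open>auto simp: space_PiM PiE_def extensional_def\<close>)
qed



locale wit =
  fixes Kr L Mr Nt Kt :: nat
  assumes pos: "Kr > 0" "L > 0" "Mr > 0" "Nt > 0" "Kt > 0" and NtKM: "Nt \<le> Kr * Mr"
begin

definition "m = min (Kr*L*Mr) (Kt*Nt)"
definition "seg c = (c div Kr) div Mr"
definition "off c = (c div Kr) mod Mr"
definition "rcv c = c mod Kr"
definition "blk c = c div Nt"
definition "rho c = (rcv c * L + seg c) * Mr + off c"
definition "Fw c \<longleftrightarrow> (\<exists>c''<m. blk c'' = blk c \<and> rcv c'' = rcv c \<and> seg c'' = seg c + 1)"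
definition "Bw c \<longleftrightarrow> (\<exists>c''<m. blk c'' = blk c \<and> rcv c'' = rcv c \<and> seg c'' + 1 = seg c)"
definition "key c = (if Fw c then seg c else if Bw c then 2*L - seg c else 3*L)"

lemma q_eq: "c div Kr = seg c * Mr + off c"
  unfolding seg_def off_def by simp

lemma c_eq: "c = (c div Kr) * Kr + rcv c"
  unfolding rcv_def by simp

lemma seg_lt: assumes "c < m" shows "seg c < L"
proof -
  have "c < L * Mr * Kr" using assms unfolding m_def by (simp add: ac_simps)
  then have "c div Kr < L * Mr" by (simp add: less_mult_imp_div_less)
  then show ?thesis unfolding seg_def by (simp add: less_mult_imp_div_less)
qed

lemma rcv_lt: "rcv c < Kr" unfolding rcv_def using pos by simp
lemma off_lt: "off c < Mr" unfolding off_def using pos by simp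

lemma rho_alt: "rho c = rcv c * (L * Mr) + (seg c * Mr + off c)"
  unfolding rho_def by (simp add: algebra_simps)

lemma inner_lt: assumes "c < m" shows "seg c * Mr + off c < L * Mr"
proof -
  have "seg c + 1 \<le> L" using seg_lt[OF assms] by simp
  then have "(seg c + 1) * Mr \<le> L * Mr" by (rule mult_le_mono1)
  then show ?thesis using off_lt[of c] by simp
qed

lemma decode:
  assumes "c < m"
  shows "rho c div (L*Mr) = rcv c" "(rho c mod (L*Mr)) div Mr = seg c" "rho c mod Mr = off c"
proof -
  have LM: "L * Mr \<noteq> 0" using pos by simp
  have Mr0: "Mr \<noteq> 0" using pos by simp
  have e: "rho c = (seg c * Mr + off c) + rcv c * (L*Mr)" unfolding rho_alt by (simp only: add.commute)
  have il: "seg c * Mr + off c < L * Mr" by (rule inner_lt[OF assms])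
  have "rho c div (L*Mr) = rcv c + (seg c * Mr + off c) div (L*Mr)"
    unfolding e by (rule div_mult_self1[OF LM])
  also have "(seg c * Mr + off c) div (L*Mr) = 0" using il by (rule div_less)
  finally show "rho c div (L*Mr) = rcv c" by simp
  have "rho c mod (L*Mr) = (seg c * Mr + off c) mod (L*Mr)"
    unfolding e by (rule mod_mult_self1)
  also have "\<dots> = seg c * Mr + off c" using il by (rule mod_less)
  finally have m1: "rho c mod (L*Mr) = off c + seg c * Mr" by (simp only: add.commute)
  have "(off c + seg c * Mr) div Mr = seg c + off c div Mr" by (rule div_mult_self1[OF Mr0])
  also have "off c div Mr = 0" using off_lt[of c] by (rule div_less)
  finally show "(rho c mod (L*Mr)) div Mr = seg c" unfolding m1 by simp
  have e2: "rho c = off c + (rcv c * L + seg c) * Mr" unfolding rho_def by (simp only: add.commute)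
  have "rho c mod Mr = off c mod Mr" unfolding e2 by (rule mod_mult_self1)
  then show "rho c mod Mr = off c" using off_lt[of c] by simp
qed

lemma rho_lt: assumes "c < m" shows "rho c < Kr * L * Mr"
proof -
  have "rcv c + 1 \<le> Kr" using rcv_lt[of c] by simp
  then have "(rcv c + 1) * (L * Mr) \<le> Kr * (L * Mr)" by (rule mult_le_mono1)
  then show ?thesis unfolding rho_alt using inner_lt[OF assms] by (simp add: ac_simps)
qed

lemma rho_inj: "inj_on rho {..<m}"
proof (rule inj_onI)
  fix c c' assume "c \<in> {..<m}" "c' \<in> {..<m}" "rho c = rho c'"
  then have "rcv c = rcv c'" "seg c = seg c'" "off c = off c'" using decode[of c] decode[of c'] by auto
  then have "c div Kr = c' div Kr" using q_eq by metis
  then show "c = c'" using c_eq[of c] c_eq[of c'] \<open>rcv c = rcv c'\<close> by metis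
qed

lemma same_blk:
  assumes "blk c1 = blk c2" "rcv c1 = rcv c2"
  shows "c1 div Kr < c2 div Kr + Mr"
proof (cases "c1 \<le> c2")
  case True
  then have "c1 div Kr \<le> c2 div Kr" by (rule div_le_mono)
  then show ?thesis using pos by simp
next
  case False
  have a: "c2 div Nt * Nt \<le> c2" by simp
  have b0: "c1 mod Nt < Nt" using pos by simp
  have b1: "c1 = c1 div Nt * Nt + c1 mod Nt" by simp
  have b: "c1 < c1 div Nt * Nt + Nt" using b0 b1 by linarith
  have c: "c1 div Nt * Nt = c2 div Nt * Nt" using assms(1) unfolding blk_def by simp
  have "c1 < c2 + Nt" using a b c by linarith
  then have "c1 < c2 + Kr * Mr" using NtKM by simp
  then have "c1 div Kr * Kr + rcv c1 < c2 div Kr * Kr + rcv c2 + Kr * Mr"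
    using c_eq[of c1] c_eq[of c2] by linarith
  then have "(c1 div Kr) * Kr < (c2 div Kr + Mr) * Kr"
    using assms(2) by (simp add: algebra_simps)
  then show ?thesis by simp
qed

lemma q_lt: "c div Kr < seg c * Mr + Mr"
  using q_eq[of c] off_lt[of c] by linarith

lemma FB_excl: "\<not> (Fw x \<and> Bw x)"
proof
  assume "Fw x \<and> Bw x"
  then obtain c1 c2 where c1: "blk c1 = blk x" "rcv c1 = rcv x" "seg c1 = seg x + 1"
    and c2: "blk c2 = blk x" "rcv c2 = rcv x" "seg c2 + 1 = seg x"
    unfolding Fw_def Bw_def by blast
  have a: "c1 div Kr < c2 div Kr + Mr" using same_blk[of c1 c2] c1 c2 by simp
  have b: "c1 div Kr \<ge> seg x * Mr + Mr" using q_eq[of c1] c1(3) by (simp add: algebra_simps)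
  have "seg c2 * Mr + Mr = seg x * Mr" using c2(3) by (metis add.commute mult_Suc plus_1_eq_Suc)
  then have c: "c2 div Kr < seg x * Mr" using q_lt[of c2] by linarith
  show False using a b c by linarith
qed

lemma hit:
  assumes "c < m" "c' < m" "c \<noteq> c'" "rcv c' = rcv c" "off c' = off c"
    and "c'' < m" "blk c'' = blk c'" "rcv c'' = rcv c" "seg c'' = seg c"
  shows "key c' < key c"
proof -
  define s where "s = seg c"
  define s' where "s' = seg c'"
  have q: "c div Kr = s * Mr + off c" using q_eq[of c] s_def by simp
  have q': "c' div Kr = s' * Mr + off c" using q_eq[of c'] s'_def assms(5) by simp
  have qne: "c div Kr \<noteq> c' div Kr"
  proof
    assume "c div Kr = c' div Kr"
    then have "c = c'" using c_eq[of c] c_eq[of c'] assms(4) by metis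
    then show False using assms(3) by simp
  qed
  have b1: "c' div Kr < c'' div Kr + Mr" using same_blk[of c' c''] assms by simp
  have b2: "c'' div Kr < c' div Kr + Mr" using same_blk[of c'' c'] assms by simp
  have q''1: "s * Mr \<le> c'' div Kr" using q_eq[of c''] assms(9) s_def by simp
  have q''2: "c'' div Kr < s * Mr + Mr" using q_lt[of c''] assms(9) s_def by simp
  have sL: "s < L" using seg_lt[OF assms(1)] s_def by simp
  have s'L: "s' < L" using seg_lt[OF assms(2)] s'_def by simp
  have cases: "s' = s + 1 \<or> s' + 1 = s"
  proof -
    have "s' \<noteq> s" using qne q q' by auto
    moreover have "\<not> s' \<ge> s + 2"
    proof
      assume "s' \<ge> s + 2"
      then have "(s + 2) * Mr \<le> s' * Mr" by (rule mult_le_mono1)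
      then have "s * Mr + 2 * Mr \<le> s' * Mr" by (simp add: algebra_simps)
      then show False using b1 q' q''2 by linarith
    qed
    moreover have "\<not> s' + 2 \<le> s"
    proof
      assume "s' + 2 \<le> s"
      then have "(s' + 2) * Mr \<le> s * Mr" by (rule mult_le_mono1)
      then have "s' * Mr + 2 * Mr \<le> s * Mr" by (simp add: algebra_simps)
      then show False using b2 q' q''1 off_lt[of c] by linarith
    qed
    ultimately show ?thesis by arith
  qed
  then show ?thesis
  proof
    assume s's: "s' + 1 = s"
    have "Fw c'" unfolding Fw_def using assms s's s_def s'_def by metis
    then have "key c' = s'" unfolding key_def s'_def by simp
    then show ?thesis unfolding key_def using s's sL s_def by auto
  next
    assume s's: "s' = s + 1"
    have "Bw c'" unfolding Bw_def using assms s's s_def s'_def by (metis add.commute)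
    then have "\<not> Fw c'" using FB_excl by blast
    then have kc': "key c' = 2 * L - s'" unfolding key_def s'_def using \<open>Bw c'\<close> by simp
    have "\<not> Fw c"
    proof
      assume "Fw c"
      then obtain c3 where c3: "c3 < m" "blk c3 = blk c" "rcv c3 = rcv c" "seg c3 = seg c + 1"
        unfolding Fw_def by blast
      have "c' div Kr = c div Kr + Mr" using q q' s's by (simp add: algebra_simps)
      then have "c' div Kr * Kr = c div Kr * Kr + Kr * Mr" by (simp add: algebra_simps)
      then have "c' = c + Kr * Mr" using c_eq[of c] c_eq[of c'] assms(4) by linarith
      then have "c + Nt \<le> c'" using NtKM by simp
      then have "(c + Nt) div Nt \<le> c' div Nt" by (rule div_le_mono)
      moreover have "(c + Nt) div Nt = c div Nt + 1" using pos by simp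
      ultimately have "blk c < blk c'" unfolding blk_def by simp
      then have "blk c3 < blk c''" using c3 assms(7) by simp
      have "c3 < c''"
      proof (rule ccontr)
        assume "\<not> c3 < c''"
        then have "c'' div Nt \<le> c3 div Nt" by (simp add: div_le_mono)
        then show False using \<open>blk c3 < blk c''\<close> unfolding blk_def by simp
      qed
      then have "c3 div Kr \<le> c'' div Kr" by (simp add: div_le_mono)
      then have "c3 div Kr div Mr \<le> c'' div Kr div Mr" by (rule div_le_mono)
      then have "seg c3 \<le> seg c''" unfolding seg_def .
      then show False using c3(4) assms(9) by simp
    qed
    then have "key c = (if Bw c then 2*L - seg c else 3*L)" by (simp add: key_def)
    then show ?thesis using kc' s's sL s'L s_def s'_def by auto
  qed
qed

end

lemma kernel_key:
  fixes v :: "nat \<Rightarrow> complex" and E :: "nat \<Rightarrow> nat \<Rightarrow> complex" and key :: "nat \<Rightarrow> nat"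
  assumes diag: "\<And>c. c < m \<Longrightarrow> E c c = 1"
    and offd: "\<And>c c'. c < m \<Longrightarrow> c' < m \<Longrightarrow> c \<noteq> c' \<Longrightarrow> E c c' \<noteq> 0 \<Longrightarrow> key c' < key c"
    and eq: "\<And>c. c < m \<Longrightarrow> (\<Sum>c'<m. E c c' * v c') = 0"
  shows "c < m \<Longrightarrow> v c = 0"
proof -
  have "\<forall>c<m. key c = n \<longrightarrow> v c = 0" for n
  proof (induction n rule: less_induct)
    case (less n)
    show ?case
    proof (intro allI impI)
      fix c assume c: "c < m" "key c = n"
      have "(\<Sum>c'<m. E c c' * v c') = E c c * v c + (\<Sum>c'\<in>{..<m} - {c}. E c c' * v c')"
        using c by (subst sum.remove[of _ c]) auto
      also have "(\<Sum>c'\<in>{..<m} - {c}. E c c' * v c') = 0"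
      proof (rule sum.neutral, intro ballI)
        fix c' assume "c' \<in> {..<m} - {c}"
        then have c': "c' < m" "c' \<noteq> c" by auto
        show "E c c' * v c' = 0"
        proof (cases "E c c' = 0")
          case False
          then have "key c' < n" using offd[OF c(1) c'(1)] c' c(2) by auto
          then show ?thesis using less.IH c' by auto
        qed simp
      qed
      finally show "v c = 0" using eq[OF c(1)] diag[OF c(1)] by simp
    qed
  qed
  then show "c < m \<Longrightarrow> v c = 0" by blast
qed



definition entB :: "nat \<Rightarrow> nat \<Rightarrow> nat \<Rightarrow> (nat\<Rightarrow>nat\<Rightarrow>nat\<Rightarrow>nat\<Rightarrow>complex) \<Rightarrow> (nat\<Rightarrow>nat\<Rightarrow>nat\<Rightarrow>complex) \<Rightarrow> nat \<Rightarrow> nat \<Rightarrow> complex" where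
  "entB L Mr Nt H g r c = g ((r mod (L*Mr)) div Mr) (r div (L*Mr)) (c div Nt) * H (r div (L*Mr)) (c div Nt) (r mod Mr) (c mod Nt)"

lemma blockC_alt: "blockC Kr Kt Mr Nt \<kappa> H g = Matrix.mat (Kr*(Kt-\<kappa>)*Mr) (Kt*Nt) (\<lambda>(r,c). entB (Kt-\<kappa>) Mr Nt H g r c)"
  unfolding blockC_def entB_def Let_def by (simp add: case_prod_beta')

lemma submatrix_square:
  assumes "R \<subseteq> {..<nr}" "card R = m" "m \<le> nc"
  shows "submatrix (Matrix.mat nr nc f) R {..<m} = Matrix.mat m m (\<lambda>(i,j). f (pick R i, j))"
proof -
  have c1: "card {i. i < dim_row (Matrix.mat nr nc f) \<and> i \<in> R} = m"
  proof -
    have "{i. i < dim_row (Matrix.mat nr nc f) \<and> i \<in> R} = R" using assms(1) by auto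
    then show ?thesis using assms(2) by simp
  qed
  have c2: "card {j. j < dim_col (Matrix.mat nr nc f) \<and> j \<in> {..<m}} = m"
  proof -
    have "{j. j < dim_col (Matrix.mat nr nc f) \<and> j \<in> {..<m}} = {..<m}" using assms(3) by auto
    then show ?thesis by simp
  qed
  show ?thesis
  proof (rule eq_matI)
    fix i j assume ij: "i < dim_row (Matrix.mat m m (\<lambda>(i,j). f (pick R i, j)))" "j < dim_col (Matrix.mat m m (\<lambda>(i,j). f (pick R i, j)))"
    then have ij': "i < m" "j < m" by auto
    have "pick R i < nr"
    proof (rule pick_le)
      have "{a. a < nr \<and> a \<in> R} = R" using assms(1) by auto
      then show "i < card {a. a < nr \<and> a \<in> R}" using ij' assms(2) by simp
    qed
    then show "submatrix (Matrix.mat nr nc f) R {..<m} $$ (i, j) = Matrix.mat m m (\<lambda>(i,j). f (pick R i, j)) $$ (i, j)"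
      using ij' assms(3) c1 c2 by (simp add: submatrix_index pick_lessThan)
  qed (use c1 c2 in \<open>simp_all add: dim_submatrix\<close>)
qed

context wit begin

definition "H0 j k a b = (if b < Nt \<and> k*Nt+b < m \<and> rcv (k*Nt+b) = j \<and> off (k*Nt+b) = a then (1::complex) else 0)"
definition "g0 i j k = (if \<exists>c<m. blk c = k \<and> rcv c = j \<and> seg c = i then (1::complex) else 0)"
definition "R = rho ` {..<m}"

lemma E0_rho:
  assumes "c < m" "c' < m"
  shows "entB L Mr Nt H0 g0 (rho c) c' = g0 (seg c) (rcv c) (blk c') * (if rcv c' = rcv c \<and> off c' = off c then 1 else 0)"
proof -
  have e: "c' div Nt * Nt + c' mod Nt = c'" by simp
  have "H0 (rcv c) (blk c') (off c) (c' mod Nt) = (if rcv c' = rcv c \<and> off c' = off c then 1 else 0)"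
    unfolding H0_def blk_def e using assms pos by auto
  then show ?thesis unfolding entB_def decode[OF assms(1)] blk_def by simp
qed

lemma E0_diag: "c < m \<Longrightarrow> entB L Mr Nt H0 g0 (rho c) c = 1"
  unfolding E0_rho[of c c] unfolding g0_def by auto

lemma E0_off:
  assumes "c < m" "c' < m" "c \<noteq> c'" "entB L Mr Nt H0 g0 (rho c) c' \<noteq> 0"
  shows "key c' < key c"
proof -
  from assms(4) have "g0 (seg c) (rcv c) (blk c') \<noteq> 0" "rcv c' = rcv c" "off c' = off c"
    unfolding E0_rho[OF assms(1,2)] by (auto split: if_splits)
  then obtain c'' where "c'' < m" "blk c'' = blk c'" "rcv c'' = rcv c" "seg c'' = seg c"
    unfolding g0_def by (auto split: if_splits)
  then show ?thesis using hit[OF assms(1,2,3)] \<open>rcv c' = rcv c\<close> \<open>off c' = off c\<close> by blast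
qed

lemma R_sub: "R \<subseteq> {..<Kr*L*Mr}" unfolding R_def using rho_lt by auto
lemma card_R: "card R = m" unfolding R_def using rho_inj by (simp add: card_image)

lemma det_wit: "det (Matrix.mat m m (\<lambda>(i,j). entB L Mr Nt H0 g0 (pick R i) j)) \<noteq> 0"
proof
  let ?S = "Matrix.mat m m (\<lambda>(i,j). entB L Mr Nt H0 g0 (pick R i) j)"
  assume "det ?S = 0"
  then obtain v where v: "v \<in> carrier_vec m" "v \<noteq> 0\<^sub>v m" "?S *\<^sub>v v = 0\<^sub>v m"
    using det_0_iff_vec_prod_zero_field[of ?S m] by auto
  have "\<And>c. c < m \<Longrightarrow> v $ c = 0"
  proof (rule kernel_key[where E = "\<lambda>c c'. entB L Mr Nt H0 g0 (rho c) c'" and key = key])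
    show "\<And>c. c < m \<Longrightarrow> entB L Mr Nt H0 g0 (rho c) c = 1" by (rule E0_diag)
    show "\<And>c c'. c < m \<Longrightarrow> c' < m \<Longrightarrow> c \<noteq> c' \<Longrightarrow> entB L Mr Nt H0 g0 (rho c) c' \<noteq> 0 \<Longrightarrow> key c' < key c"
      by (rule E0_off)
    fix c assume c: "c < m"
    define i where "i = card {a\<in>R. a < rho c}"
    have rR: "rho c \<in> R" unfolding R_def using c by auto
    have pick: "pick R i = rho c" unfolding i_def using rR by (rule pick_card_in_set)
    have "{a\<in>R. a < rho c} \<subset> R" using rR by auto
    then have "i < card R" unfolding i_def by (rule psubset_card_mono[rotated]) (simp add: R_def)
    then have im: "i < m" using card_R by simp
    have "(?S *\<^sub>v v) $ i = 0" using v(3) im by simp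
    moreover have "(?S *\<^sub>v v) $ i = (\<Sum>c'<m. entB L Mr Nt H0 g0 (rho c) c' * v $ c')"
      using im v(1) by (simp add: scalar_prod_def pick lessThan_atLeast0)
    ultimately show "(\<Sum>c'<m. entB L Mr Nt H0 g0 (rho c) c' * v $ c') = 0" by simp
  qed
  then have "v = 0\<^sub>v m" using v(1) by (intro eq_vecI) auto
  then show False using v(2) by simp
qed

end

lemma atomless_gauss:
  assumes "prob_space M" "std_circ_gaussian M Z" "Z \<in> borel_measurable M"
  shows "emeasure (distr M borel Z) {z} = 0"
proof -
  obtain f where d: "distributed M lborel (\<lambda>w. Re (Z w)) f"
    using assms(2) unfolding std_circ_gaussian_def by blast
  have "emeasure (distr M borel Z) {z} = emeasure M (Z -` {z} \<inter> space M)"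
    using assms(3) by (simp add: emeasure_distr)
  also have "\<dots> \<le> emeasure M ((\<lambda>w. Re (Z w)) -` {Re z} \<inter> space M)"
  proof (rule emeasure_mono)
    show "Z -` {z} \<inter> space M \<subseteq> (\<lambda>w. Re (Z w)) -` {Re z} \<inter> space M" by auto
    have "(\<lambda>w. Re (Z w)) \<in> borel_measurable M" using assms(3) by measurable
    then show "(\<lambda>w. Re (Z w)) -` {Re z} \<inter> space M \<in> sets M" by measurable
  qed
  also have "\<dots> = (\<integral>\<^sup>+x. f x * indicator {Re z} x \<partial>lborel)"
    using d by (rule distributed_emeasure) simp
  also have "\<dots> = 0"
  proof -
    have ae: "AE x in lborel. f x * indicator {Re z} x = 0"
      using AE_lborel_singleton[of "Re z"] by eventually_elim auto
    show ?thesis using nn_integral_cong_AE[OF ae] by simp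
  qed
  finally show ?thesis by simp
qed

lemma atomless_meas:
  fixes X :: "'a \<Rightarrow> complex"
  assumes "prob_space M" "X \<in> borel_measurable M" "measure M {w \<in> space M. X w = z} = 0"
  shows "emeasure (distr M borel X) {z} = 0"
proof -
  interpret prob_space M by fact
  have "emeasure (distr M borel X) {z} = emeasure M (X -` {z} \<inter> space M)"
    by (intro emeasure_distr assms(2) borel_closed) simp
  also have "X -` {z} \<inter> space M = {w \<in> space M. X w = z}" by auto
  also have "emeasure M {w \<in> space M. X w = z} = ennreal (measure M {w \<in> space M. X w = z})"
    using assms(2) by (intro emeasure_eq_measure)
  finally show ?thesis using assms(3) by simp
qed

theorem lemma2:
  fixes M :: "'w measure"
    and Kr Kt Mr Nt \<kappa> :: nat
    and H :: "nat \<Rightarrow> nat \<Rightarrow> nat \<Rightarrow> nat \<Rightarrow> 'w \<Rightarrow> complex"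
    and \<gamma> :: "nat \<Rightarrow> nat \<Rightarrow> nat \<Rightarrow> 'w \<Rightarrow> complex"
  assumes "prob_space M"
    and "Kr > 0" and "Kt > 0" and "Mr > 0" and "Nt > 0"
    and "\<kappa> \<le> Kt - 1"
    \<comment> \<open>entries of H_jk: std. circularly symmetric complex Gaussians\<close>
    and gauss: "\<And>j k a b. j < Kr \<Longrightarrow> k < Kt \<Longrightarrow> a < Mr \<Longrightarrow> b < Nt \<Longrightarrow>
                  std_circ_gaussian M (H j k a b)"
    \<comment> \<open>gammas identically distributed with a continuous (atomless) distribution\<close>
    and gamma_id: "\<And>i j k i' j' k'. i < Kt - \<kappa> \<Longrightarrow> j < Kr \<Longrightarrow> k < Kt \<Longrightarrow>
                  i' < Kt - \<kappa> \<Longrightarrow> j' < Kr \<Longrightarrow> k' < Kt \<Longrightarrow>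
                  distr M borel (\<gamma> i j k) = distr M borel (\<gamma> i' j' k')"
    and gamma_cont: "\<And>i j k z. i < Kt - \<kappa> \<Longrightarrow> j < Kr \<Longrightarrow> k < Kt \<Longrightarrow>
                  measure M {w \<in> space M. \<gamma> i j k w = z} = 0"
    \<comment> \<open>all channel entries and all gammas are mutually independent\<close>
    and indep: "prob_space.indep_vars M (\<lambda>_. borel)
                  (\<lambda>x. case x of Inl (j, k, a, b) \<Rightarrow> H j k a b | Inr (i, j, k) \<Rightarrow> \<gamma> i j k)
                  ({Inl (j, k, a, b) | j k a b. j < Kr \<and> k < Kt \<and> a < Mr \<and> b < Nt} \<union>
                   {Inr (i, j, k) | i j k. i < Kt - \<kappa> \<and> j < Kr \<and> k < Kt})"
    and "Nt \<le> Kr * Mr"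
  shows "AE w in M. mat_rank (blockC Kr Kt Mr Nt \<kappa> (\<lambda>j k a b. H j k a b w) (\<lambda>i j k. \<gamma> i j k w))
                    = min (Kr * (Kt - \<kappa>) * Mr) (Kt * Nt)"
  proof -
  interpret P: prob_space M by fact
  define L where "L = Kt - \<kappa>"
  have Lpos: "L > 0" using assms(3,6) unfolding L_def by linarith
  interpret W: wit Kr L Mr Nt Kt
    by unfold_locales (use assms Lpos in auto)
  define I where "I = ({Inl (j, k, a, b) | j k a b. j < Kr \<and> k < Kt \<and> a < Mr \<and> b < Nt} \<union>
                   {Inr (i, j, k) | i j k. i < Kt - \<kappa> \<and> j < Kr \<and> k < Kt})"
  define X where "X = (\<lambda>x. case x of Inl (j, k, a, b) \<Rightarrow> H j k a b | Inr (i, j, k) \<Rightarrow> \<gamma> i j k)"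
  define Hof :: "((nat \<times> nat \<times> nat \<times> nat) + (nat \<times> nat \<times> nat) \<Rightarrow> complex) \<Rightarrow> nat \<Rightarrow> nat \<Rightarrow> nat \<Rightarrow> nat \<Rightarrow> complex"
    where "Hof x = (\<lambda>j k a b. x (Inl (j,k,a,b)))" for x
  define gof :: "((nat \<times> nat \<times> nat \<times> nat) + (nat \<times> nat \<times> nat) \<Rightarrow> complex) \<Rightarrow> nat \<Rightarrow> nat \<Rightarrow> nat \<Rightarrow> complex"
    where "gof x = (\<lambda>i j k. x (Inr (i,j,k)))" for x
  define nr where "nr = Kr * L * Mr"
  define nc where "nc = Kt * Nt"
  define F where "F x = det (Matrix.mat W.m W.m (\<lambda>(i,j). entB L Mr Nt (Hof x) (gof x) (pick W.R i) j))" for x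
  define D where "D u = distr M borel (X u)" for u
  have indep': "P.indep_vars (\<lambda>_. borel) X I" using indep unfolding I_def X_def .
  have Iin: "I = Inl ` ({..<Kr} \<times> {..<Kt} \<times> {..<Mr} \<times> {..<Nt}) \<union> Inr ` ({..<L} \<times> {..<Kr} \<times> {..<Kt})"
    unfolding I_def L_def by auto
  have finI: "finite I" unfolding Iin by simp
  have Ine: "I \<noteq> {}" unfolding Iin using assms(2-5) Lpos by auto
  have rv: "\<And>u. u \<in> I \<Longrightarrow> X u \<in> borel_measurable M"
    using indep' unfolding P.indep_vars_def2 by auto
  have mnc: "W.m \<le> nc" unfolding W.m_def nc_def by simp
  have mnr: "W.m \<le> nr" unfolding W.m_def nr_def by simp
  have idx: "Inl (r div (L*Mr), c div Nt, r mod Mr, c mod Nt) \<in> I \<and> Inr ((r mod (L*Mr)) div Mr, r div (L*Mr), c div Nt) \<in> I"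
    if "r < nr" "c < nc" for r c
  proof -
    have "r < Kr * (L*Mr)" using that(1) unfolding nr_def by (simp add: ac_simps)
    then have 1: "r div (L*Mr) < Kr" by (simp add: less_mult_imp_div_less)
    have "c < Kt * Nt" using that(2) unfolding nc_def .
    then have 2: "c div Nt < Kt" by (simp add: less_mult_imp_div_less)
    have 3: "r mod Mr < Mr" "c mod Nt < Nt" using assms(4,5) by auto
    have "r mod (L*Mr) < L*Mr" using Lpos assms(4) by simp
    then have 4: "(r mod (L*Mr)) div Mr < L" by (simp add: less_mult_imp_div_less)
    show ?thesis unfolding Iin using 1 2 3 4 by auto
  qed
  have ent_cong: "entB L Mr Nt (Hof x) (gof x) r c = entB L Mr Nt (Hof y) (gof y) r c"
    if "\<And>u. u \<in> I \<Longrightarrow> x u = y u" "r < nr" "c < nc" for x y r c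
    using idx[OF that(2,3)] that(1) unfolding entB_def Hof_def gof_def by simp
  have pickR: "pick W.R i < nr" if "i < W.m" for i
  proof (rule pick_le)
    have "{a. a < nr \<and> a \<in> W.R} = W.R" using W.R_sub unfolding nr_def by auto
    then show "i < card {a. a < nr \<and> a \<in> W.R}" using that W.card_R by simp
  qed
  have F_cong: "F x = F y" if "\<And>u. u \<in> I \<Longrightarrow> x u = y u" for x y
  proof -
    have "Matrix.mat W.m W.m (\<lambda>(i,j). entB L Mr Nt (Hof x) (gof x) (pick W.R i) j) =
          Matrix.mat W.m W.m (\<lambda>(i,j). entB L Mr Nt (Hof y) (gof y) (pick W.R i) j)"
      using ent_cong[OF that pickR] mnc by (intro eq_matI) auto
    then show ?thesis unfolding F_def by simp
  qed
  have mpF: "mpoly I F"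
    unfolding F_def entB_def Hof_def gof_def
    by (intro mpoly_det mpoly_mult mpoly_coord)
  have measF0: "F \<in> borel_measurable (PiM I (\<lambda>_. borel))"
    unfolding F_def entB_def Hof_def gof_def
    by (intro meas_det borel_measurable_times meas_coord)
  have setsPi: "sets (PiM I D) = sets (PiM I (\<lambda>_. borel :: complex measure))"
    by (rule sets_PiM_cong) (auto simp: D_def)
  have measF: "F \<in> borel_measurable (PiM I D)"
    using measF0 by (subst measurable_cong_sets[OF setsPi refl])
  define X0 where "X0 = (\<lambda>x. case x of Inl (j, k, a, b) \<Rightarrow> W.H0 j k a b | Inr (i, j, k) \<Rightarrow> W.g0 i j k)"
  have F0: "F (restrict X0 I) \<noteq> 0"
  proof -
    have "F (restrict X0 I) = F X0" by (rule F_cong) simp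
    moreover have "Hof X0 = W.H0" "gof X0 = W.g0" unfolding Hof_def gof_def X0_def by (auto simp: fun_eq_iff)
    ultimately show ?thesis unfolding F_def using W.det_wit by simp
  qed
  have x0sp: "restrict X0 I \<in> space (PiM I D)" by (simp add: space_PiM D_def)
  have AEpi: "AE x in PiM I D. F x \<noteq> 0"
  proof (rule AE_mpoly[OF finI _ _ _ mpF measF x0sp F0])
    fix u assume u: "u \<in> I"
    show "prob_space (D u)" unfolding D_def using rv[OF u] by (rule P.prob_space_distr)
    show "sets (D u) = sets borel" unfolding D_def by simp
    fix z
    show "emeasure (D u) {z} = 0"
    proof (cases u)
      case (Inl t)
      then obtain j k a b where t: "u = Inl (j,k,a,b)" by (metis prod_cases4)
      then have jk: "j < Kr" "k < Kt" "a < Mr" "b < Nt" using u unfolding Iin by auto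
      have "X u = H j k a b" unfolding X_def t by simp
      then show ?thesis unfolding D_def
        using atomless_gauss[OF assms(1) gauss[OF jk] ] rv[OF u] by simp
    next
      case (Inr t)
      then obtain i j k where t: "u = Inr (i,j,k)" by (metis prod_cases3)
      then have ijk: "i < Kt - \<kappa>" "j < Kr" "k < Kt" using u unfolding Iin L_def by auto
      have "X u = \<gamma> i j k" unfolding X_def t by simp
      then show ?thesis unfolding D_def
        using atomless_meas[OF assms(1) _ gamma_cont[OF ijk]] rv[OF u] by simp
    qed
  qed
  have deq: "distr M (PiM I (\<lambda>_. borel)) (\<lambda>w. \<lambda>u\<in>I. X u w) = PiM I D"
    unfolding D_def using P.indep_vars_iff_distr_eq_PiM'[OF Ine, where M'="\<lambda>_. borel" and X=X] rv indep' by simp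
  have Xm: "(\<lambda>w. \<lambda>u\<in>I. X u w) \<in> measurable M (PiM I (\<lambda>_. borel))"
    using rv by (intro measurable_restrict) auto
  have "AE w in M. F (\<lambda>u\<in>I. X u w) \<noteq> 0"
  proof -
    have "AE x in distr M (PiM I (\<lambda>_. borel)) (\<lambda>w. \<lambda>u\<in>I. X u w). F x \<noteq> 0"
      using AEpi unfolding deq .
    then show ?thesis
      by (subst (asm) AE_distr_iff[OF Xm]) (use measF0 in \<open>measurable\<close>)
  qed
  then show ?thesis
  proof (rule eventually_mono)
    fix w assume Fw: "F (\<lambda>u\<in>I. X u w) \<noteq> 0"
    define A where "A = blockC Kr Kt Mr Nt \<kappa> (\<lambda>j k a b. H j k a b w) (\<lambda>i j k. \<gamma> i j k w)"
    have Aeq: "A = Matrix.mat nr nc (\<lambda>(r,c). entB L Mr Nt (\<lambda>j k a b. H j k a b w) (\<lambda>i j k. \<gamma> i j k w) r c)"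
      unfolding A_def blockC_alt nr_def nc_def L_def ..
    have Hw: "Hof (\<lambda>u. X u w) = (\<lambda>j k a b. H j k a b w)" "gof (\<lambda>u. X u w) = (\<lambda>i j k. \<gamma> i j k w)"
      unfolding Hof_def gof_def X_def by (auto simp: fun_eq_iff)
    have "F (\<lambda>u\<in>I. X u w) = F (\<lambda>u. X u w)" by (rule F_cong) simp
    also have "\<dots> = det (submatrix A W.R {..<W.m})"
      unfolding F_def Aeq Hw
      by (subst submatrix_square[OF _ W.card_R mnc]) (use W.R_sub in \<open>auto simp: nr_def\<close>)
    finally have dA: "det (submatrix A W.R {..<W.m}) \<noteq> 0" using Fw by simp
    have Ac: "A \<in> carrier_mat nr nc" unfolding Aeq by simp
    have "card {j. j < nc \<and> j \<in> {..<W.m}} \<le> vec_space.rank nr A"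
      by (rule vec_space.rank_gt_minor[OF Ac dA])
    moreover have "{j. j < nc \<and> j \<in> {..<W.m}} = {..<W.m}" using mnc by auto
    ultimately have ge: "W.m \<le> vec_space.rank nr A" by simp
    have le1: "vec_space.rank nr A \<le> nc" by (rule vec_space.rank_le_nc[OF Ac])
    have le2: "vec_space.rank nr A \<le> nr" by (rule vec_space.rank_le_nr[OF Ac])
    have "mat_rank A = vec_space.rank nr A" unfolding mat_rank_def using Ac by simp
    moreover have "W.m = min (Kr * L * Mr) (Kt * Nt)" by (rule W.m_def)
    ultimately show "mat_rank A = min (Kr * (Kt - \<kappa>) * Mr) (Kt * Nt)"
      using ge le1 le2 unfolding nr_def nc_def L_def by (auto simp: min_def split: if_splits)
  qed
qed

end
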